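(* In the setting of the context, assume $q<q_c$ and let $\beta\in(0,1)$. For the estimate $\hat q$ (when $\hat q<q_c$), let $\bar q$ be the optimal value of the problem $$\max_{x\in[0,1]} x\quad\text{s.t.}\quad x\ge\hat q,\quad Q+(1-x)\hat K^\top R\hat K-(x-\hat q)A^\top\hat PB(R+B^\top\hat PB)^{-1}B^\top\hat PA\succ0 .$$ Then with probability at least $1-\beta$ (over the samples) the following holds: if $\hat q<q_c$ and $\bar q\ge\hat q+\Delta(N_q,\beta)$, where $\Delta(N_q,\beta)=\sqrt{\log(2/\beta)/(2N_q)}$, then $\hat K$ mean-square stabilizes the system.
   Context: Let $A\in\mathbb{R}^{n\times n}$, $B\in\mathbb{R}^{n\times m}$ with $(A,B)$ stabilizable, and let $Q$, $R$ be symmetric positive definite. Consider $x_{t+1}=Ax_t+\lambda_tBu_t$, $t\ge0$, with $x_0$ random with finite mean and covariance and $\{\lambda_t\}$ i.i.d. Bernoulli, independent of $x_0$, with $\mathcal{P}(\lambda_t=0)=q$, $q\in(0,1)$ unknown. The estimate is $\hat q=\frac1{N_q}\sum_{i=1}^{N_q}(1-\lambda_i)$ from $N_q$ i.i.d. samples with the same Bernoulli law. For $p\in[0,1)$ the modified Riccati equation with parameter $p$ is $X=Q+A^\top XA-(1-p)A^\top XB(R+B^\top XB)^{-1}B^\top XA$; $q_c$ is the critical loss probability such that for every $p\in[0,q_c)$ this equation has a unique positive definite solution. For $\hat q\in[0,q_c)$, $\hat P$ is the positive definite solution for parameter $\hat q$ and $\hat K=-(R+B^\top\hat PB)^{-1}B^\top\hat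 PA$. $\hat K$ mean-square stabilizes the system if the closed loop $x_{t+1}=(A+\lambda_tB\hat K)x_t$ satisfies $\lim_{t\to\infty}\mathbb{E}\{x_t^\top x_t\}=0$. *)

theory Defs
  imports "HOL-Analysis.Analysis" "HOL-Probability.Probability"
begin

text \<open>Matrices are HOL-Analysis vectors of vectors: real^'n^'n etc.
  Bernoulli variables lambda_t are booleans: True means lambda_t = 1 (packet delivered),
  False means lambda_t = 0 (loss), so P(lambda_t = 0) = q is bernoulli_pmf (1 - q).\<close>

definition posdef :: "real^'n^'n \<Rightarrow> bool" where
  "posdef X \<longleftrightarrow> transpose X = X \<and> (\<forall>x. x \<noteq> 0 \<longrightarrow> x \<bullet> (X *v x) > 0)"

text \<open>(A,B) stabilizable: some state feedback K makes x_{t+1} = (A + B K) x_t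
  asymptotically stable.\<close>
definition stabilizable :: "real^'n^'n \<Rightarrow> real^'m^'n \<Rightarrow> bool" where
  "stabilizable A B \<longleftrightarrow> (\<exists>K :: real^'n^'m. \<forall>x0.
      (\<lambda>t. (((*v) (A + B ** K)) ^^ t) x0) \<longlonglongrightarrow> 0)"

text \<open>Modified Riccati equation with parameter p.\<close>
definition MRE :: "real^'n^'n \<Rightarrow> real^'m^'n \<Rightarrow> real^'n^'n \<Rightarrow> real^'m^'m
      \<Rightarrow> real \<Rightarrow> real^'n^'n \<Rightarrow> bool" where
  "MRE A B Q R p X \<longleftrightarrow>
     X = Q + transpose A ** X ** A
         - (1 - p) *\<^sub>R (transpose A ** X ** B ** matrix_inv (R + transpose B ** X ** B)
                          ** transpose B ** X ** A)"

text \<open>Critical loss probability: the supremum of all c such that for every p in [0,c)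
  the modified Riccati equation has a unique positive definite solution.\<close>
definition crit_prob :: "real^'n^'n \<Rightarrow> real^'m^'n \<Rightarrow> real^'n^'n \<Rightarrow> real^'m^'m \<Rightarrow> real" where
  "crit_prob A B Q R = Sup {c \<in> {0..1}. \<forall>p \<in> {0..<c}. \<exists>!X. posdef X \<and> MRE A B Q R p X}"

text \<open>The positive definite solution for parameter p, and the associated gain.\<close>
definition ric_sol :: "real^'n^'n \<Rightarrow> real^'m^'n \<Rightarrow> real^'n^'n \<Rightarrow> real^'m^'m
      \<Rightarrow> real \<Rightarrow> real^'n^'n" where
  "ric_sol A B Q R p = (THE X. posdef X \<and> MRE A B Q R p X)"

definition ric_gain :: "real^'n^'n \<Rightarrow> real^'m^'n \<Rightarrow> real^'n^'n \<Rightarrow> real^'m^'m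
      \<Rightarrow> real \<Rightarrow> real^'n^'m" where
  "ric_gain A B Q R p =
     (let P = ric_sol A B Q R p in
        - (matrix_inv (R + transpose B ** P ** B) ** transpose B ** P ** A))"

text \<open>Optimal value of: max x in [0,1] s.t. x >= qh and the LMI is positive definite.\<close>
definition qbar :: "real^'n^'n \<Rightarrow> real^'m^'n \<Rightarrow> real^'n^'n \<Rightarrow> real^'m^'m
      \<Rightarrow> real \<Rightarrow> real" where
  "qbar A B Q R qh =
     (let P = ric_sol A B Q R qh; K = ric_gain A B Q R qh in
      Sup {x \<in> {0..1}. x \<ge> qh \<and>
        posdef (Q + (1 - x) *\<^sub>R (transpose K ** R ** K)
                 - (x - qh) *\<^sub>R (transpose A ** P ** B ** matrix_inv (R + transpose B ** P ** B)
                                   ** transpose B ** P ** A))})"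

text \<open>Closed-loop state x_{t+1} = (A + lambda_t B K) x_t.\<close>
primrec cl_state :: "real^'n^'n \<Rightarrow> real^'m^'n \<Rightarrow> real^'n^'m \<Rightarrow> real^'n
      \<Rightarrow> (nat \<Rightarrow> bool) \<Rightarrow> nat \<Rightarrow> real^'n" where
  "cl_state A B K x0 lam 0 = x0"
| "cl_state A B K x0 lam (Suc t) =
     (A + (if lam t then 1 else 0) *\<^sub>R (B ** K)) *v cl_state A B K x0 lam t"

text \<open>Law of the i.i.d. Bernoulli sequence (lambda_t), with P(lambda_t = 0) = q.\<close>
definition lam_measure :: "real \<Rightarrow> (nat \<Rightarrow> bool) measure" where
  "lam_measure q = PiM UNIV (\<lambda>_. measure_pmf (bernoulli_pmf (1 - q)))"

text \<open>K mean-square stabilizes the system: for every distribution mu of x_0 with finite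
  mean and covariance (finite second moment), x_0 independent of (lambda_t) (product measure),
  E[x_t^T x_t] tends to 0.\<close>
definition ms_stabilizes :: "real^'n^'n \<Rightarrow> real^'m^'n \<Rightarrow> real \<Rightarrow> real^'n^'m \<Rightarrow> bool" where
  "ms_stabilizes A B q K \<longleftrightarrow>
    (\<forall>\<mu> :: (real^'n) measure. prob_space \<mu> \<and> sets \<mu> = sets borel
        \<and> integrable \<mu> (\<lambda>x. norm x ^ 2) \<longrightarrow>
      (\<lambda>t. \<integral>\<^sup>+ \<omega>. ennreal ((cl_state A B K (fst \<omega>) (snd \<omega>) t) \<bullet> (cl_state A B K (fst \<omega>) (snd \<omega>) t))
              \<partial>(\<mu> \<Otimes>\<^sub>M lam_measure q)) \<longlonglongrightarrow> 0)"

text \<open>Estimate from N samples lambda_0..lambda_{N-1}.\<close>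
definition q_hat :: "nat \<Rightarrow> (nat \<Rightarrow> bool) \<Rightarrow> real" where
  "q_hat N s = (\<Sum>i<N. (if s i then 0 else 1)) / real N"

definition sample_pmf :: "nat \<Rightarrow> real \<Rightarrow> (nat \<Rightarrow> bool) pmf" where
  "sample_pmf N q = Pi_pmf {..<N} True (\<lambda>_. bernoulli_pmf (1 - q))"

definition Delta :: "nat \<Rightarrow> real \<Rightarrow> real" where
  "Delta N \<beta> = sqrt (ln (2 / \<beta>) / (2 * real N))"

end

theory Submission
  imports Defs
begin


lemma quad_lower:
  fixes S :: "real^'n^'n"
  assumes pos: "\<And>x. x \<noteq> 0 \<Longrightarrow> x \<bullet> (S *v x) > 0"
  shows "\<exists>e>0. \<forall>x. x \<bullet> (S *v x) \<ge> e * (norm x)\<^sup>2"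
proof -
  have cont: "continuous_on (sphere 0 1) (\<lambda>x::real^'n. x \<bullet> (S *v x))"
    by (intro continuous_intros linear_continuous_on matrix_vector_mul_linear)
  obtain a :: "real^'n" where a: "norm a = 1" using vector_choose_size[of 1] by auto
  have ne: "sphere (0::real^'n) 1 \<noteq> {}" using a by auto
  obtain u where u: "u \<in> sphere 0 1" and umin: "\<And>y. y \<in> sphere 0 1 \<Longrightarrow> u \<bullet> (S *v u) \<le> y \<bullet> (S *v y)"
    using continuous_attains_inf[OF compact_sphere ne cont] by blast
  have "u \<noteq> 0" using u by auto
  then have e: "u \<bullet> (S *v u) > 0" using pos by blast
  show ?thesis
  proof (intro exI[of _ "u \<bullet> (S *v u)"] conjI allI e)
    fix x :: "real^'n"
    show "x \<bullet> (S *v x) \<ge> (u \<bullet> (S *v u)) * (norm x)\<^sup>2"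
    proof (cases "x = 0")
      case True then show ?thesis by simp
    next
      case False
      define y where "y = (1 / norm x) *\<^sub>R x"
      have y: "y \<in> sphere 0 1" using False by (simp add: y_def)
      have xy: "x = norm x *\<^sub>R y" using False by (simp add: y_def)
      have "x \<bullet> (S *v x) = (norm x)\<^sup>2 * (y \<bullet> (S *v y))"
        by (subst (1 2) xy) (simp add: matrix_vector_mult_scaleR power2_eq_square)
      have uy: "u \<bullet> (S *v u) \<le> y \<bullet> (S *v y)" using umin y by blast
      have "u \<bullet> (S *v u) * (norm x)\<^sup>2 \<le> (y \<bullet> (S *v y)) * (norm x)\<^sup>2"
        by (rule mult_right_mono[OF uy]) simp
      then show ?thesis using \<open>x \<bullet> (S *v x) = (norm x)\<^sup>2 * (y \<bullet> (S *v y))\<close> by (simp add: mult.commute)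
    qed
  qed
qed

lemma quad_upper:
  fixes S :: "real^'n^'n"
  shows "\<exists>C>0. \<forall>x. x \<bullet> (S *v x) \<le> C * (norm x)\<^sup>2"
proof -
  have "bounded_linear (\<lambda>x::real^'n. S *v x)"
    by (simp add: matrix_vector_mul_bounded_linear)
  then obtain C where C: "C > 0" "\<And>x. norm (S *v x) \<le> norm x * C"
    using bounded_linear.pos_bounded by blast
  show ?thesis
  proof (intro exI[of _ C] conjI allI C)
    fix x :: "real^'n"
    have "x \<bullet> (S *v x) \<le> norm x * norm (S *v x)" by (rule norm_cauchy_schwarz)
    also have "\<dots> \<le> norm x * (norm x * C)" using C by (simp add: mult_left_mono)
    finally show "x \<bullet> (S *v x) \<le> C * (norm x)\<^sup>2" by (simp add: power2_eq_square algebra_simps)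
  qed
qed

lemma cl_state_meas:
  fixes A :: "real^'n^'n" and B :: "real^'m^'n" and K :: "real^'n^'m"
  assumes X0: "X0 \<in> borel_measurable N"
    and L: "\<And>i. (\<lambda>\<omega>. Lam \<omega> i) \<in> measurable N (count_space UNIV)"
  shows "(\<lambda>\<omega>. cl_state A B K (X0 \<omega>) (Lam \<omega>) t) \<in> borel_measurable N"
proof (induction t)
  case 0 then show ?case using X0 by simp
next
  case (Suc t)
  have eq: "(\<lambda>\<omega>. cl_state A B K (X0 \<omega>) (Lam \<omega>) (Suc t)) =
     (\<lambda>\<omega>. if Lam \<omega> t then (A + B ** K) *v cl_state A B K (X0 \<omega>) (Lam \<omega>) t
             else A *v cl_state A B K (X0 \<omega>) (Lam \<omega>) t)"
  proof
    fix \<omega> show "cl_state A B K (X0 \<omega>) (Lam \<omega>) (Suc t) = (if Lam \<omega> t then (A + B ** K) *v cl_state A B K (X0 \<omega>) (Lam \<omega>) t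
             else A *v cl_state A B K (X0 \<omega>) (Lam \<omega>) t)"
      by (cases "Lam \<omega> t") simp_all
  qed
  have c1: "continuous_on UNIV (\<lambda>x::real^'n. (A + B ** K) *v x)"
    by (intro linear_continuous_on matrix_vector_mul_bounded_linear)
  have c2: "continuous_on UNIV (\<lambda>x::real^'n. A *v x)"
    by (intro linear_continuous_on matrix_vector_mul_bounded_linear)
  have p: "{\<omega> \<in> space N. Lam \<omega> t} \<in> sets N"
  proof -
    have "(\<lambda>\<omega>. Lam \<omega> t) -` {True} \<inter> space N \<in> sets N"
      using L[of t] by (rule measurable_sets) simp
    moreover have "{\<omega> \<in> space N. Lam \<omega> t} = (\<lambda>\<omega>. Lam \<omega> t) -` {True} \<inter> space N" by auto
    ultimately show ?thesis by simp
  qed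
  show ?case unfolding eq
    by (rule measurable_If[OF borel_measurable_continuous_on[OF c1 Suc]
          borel_measurable_continuous_on[OF c2 Suc] p])
qed

lemma cl_state_shift:
  "cl_state A B K x0 lam (Suc t) =
   cl_state A B K ((A + (if lam 0 then 1 else 0) *\<^sub>R (B ** K)) *v x0) (\<lambda>i. lam (Suc i)) t"
  by (induction t) simp_all


lemma (in prob_space) pim_split:
  assumes f[measurable]: "f \<in> borel_measurable (PiM UNIV (\<lambda>i::nat. M))"
  shows "(\<integral>\<^sup>+\<omega>. f \<omega> \<partial>PiM UNIV (\<lambda>i. M)) = (\<integral>\<^sup>+b. (\<integral>\<^sup>+\<omega>. f (case_nat b \<omega>) \<partial>PiM UNIV (\<lambda>i. M)) \<partial>M)"
proof -
  interpret S: sequence_space M ..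
  interpret P: pair_sigma_finite M "\<Pi>\<^sub>M i::nat\<in>UNIV. M" ..
  have "(\<integral>\<^sup>+\<omega>. f \<omega> \<partial>S.S) = (\<integral>\<^sup>+X. f ((\<lambda>(s, \<omega>). case_nat s \<omega>) X) \<partial>(M \<Otimes>\<^sub>M S.S))"
    by (subst S.PiM_iter[symmetric]) (simp add: nn_integral_distr)
  also have "\<dots> = (\<integral>\<^sup>+x. \<integral>\<^sup>+X. f ((\<lambda>(s, \<omega>). case_nat s \<omega>) (x, X)) \<partial>S.S \<partial>M)"
    by (subst S.nn_integral_fst) simp_all
  finally show ?thesis by simp
qed



lemma lam_prob: "prob_space (lam_measure q)"
  unfolding lam_measure_def by (intro prob_space_PiM measure_pmf.prob_space_axioms)

lemma lam_comp_meas: "(\<lambda>\<omega>. \<omega> i) \<in> measurable (lam_measure q) (count_space UNIV)"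
proof -
  have "(\<lambda>\<omega>. \<omega> i) \<in> measurable (lam_measure q) (measure_pmf (bernoulli_pmf (1 - q)))"
    unfolding lam_measure_def by (rule measurable_component_singleton) simp
  moreover have "measurable (lam_measure q) (measure_pmf (bernoulli_pmf (1 - q))) = measurable (lam_measure q) (count_space UNIV)"
    by (rule measurable_cong_sets) simp_all
  ultimately show ?thesis by simp
qed

lemma enn_comb:
  fixes x a b q :: real
  assumes "0 \<le> x" "0 \<le> a" "0 \<le> b" "0 \<le> q" "q \<le> 1"
  shows "ennreal (x * a) * ennreal (1 - q) + ennreal (x * b) * ennreal q = ennreal (x * ((1 - q) * a + q * b))"
proof -
  have 1: "ennreal (x * a) * ennreal (1 - q) = ennreal (x * a * (1 - q))"
    by (rule ennreal_mult[symmetric]) (use assms in auto)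
  have 2: "ennreal (x * b) * ennreal q = ennreal (x * b * q)"
    by (rule ennreal_mult[symmetric]) (use assms in auto)
  have "ennreal (x * a * (1 - q)) + ennreal (x * b * q) = ennreal (x * a * (1 - q) + x * b * q)"
    by (rule ennreal_plus[symmetric]) (use assms in auto)
  then show ?thesis unfolding 1 2 by (simp add: algebra_simps)
qed

lemma V_cont: "continuous_on UNIV (\<lambda>x::real^'n. x \<bullet> ((P::real^'n^'n) *v x))"
  by (intro continuous_intros linear_continuous_on matrix_vector_mul_bounded_linear)

lemma inner_decay:
  fixes A :: "real^'n^'n" and B :: "real^'m^'n" and K :: "real^'n^'m" and P :: "real^'n^'n"
  assumes q: "0 \<le> q" "q \<le> 1"
    and Vnn: "\<And>x. 0 \<le> x \<bullet> (P *v x)"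
    and dec: "\<And>x. (1 - q) * (((A + B ** K) *v x) \<bullet> (P *v ((A + B ** K) *v x))) + q * ((A *v x) \<bullet> (P *v (A *v x)))
               \<le> c * (x \<bullet> (P *v x))"
    and c: "0 \<le> c"
  shows "(\<integral>\<^sup>+\<omega>. ennreal ((cl_state A B K x0 \<omega> t) \<bullet> (P *v cl_state A B K x0 \<omega> t)) \<partial>lam_measure q)
         \<le> ennreal (c ^ t * (x0 \<bullet> (P *v x0)))"
proof (induction t arbitrary: x0)
  case 0
  interpret L: prob_space "lam_measure q" by (rule lam_prob)
  show ?case by (simp add: L.emeasure_space_1)
next
  case (Suc t)
  define Lb where "Lb = measure_pmf (bernoulli_pmf (1 - q))"
  interpret Lb: prob_space Lb unfolding Lb_def by (rule measure_pmf.prob_space_axioms)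
  define V where "V = (\<lambda>x::real^'n. x \<bullet> (P *v x))"
  have Vc: "continuous_on UNIV V" unfolding V_def by (rule V_cont)
  have meas: "(\<lambda>\<omega>. ennreal (V (cl_state A B K x0 \<omega> (Suc t)))) \<in> borel_measurable (PiM UNIV (\<lambda>i::nat. Lb))"
  proof -
    have "(\<lambda>\<omega>. cl_state A B K ((\<lambda>_. x0) \<omega>) (id \<omega>) (Suc t)) \<in> borel_measurable (lam_measure q)"
      by (rule cl_state_meas) (simp_all add: lam_comp_meas)
    then have "(\<lambda>\<omega>. V (cl_state A B K x0 \<omega> (Suc t))) \<in> borel_measurable (lam_measure q)"
      using borel_measurable_continuous_on[OF Vc] by simp
    then show ?thesis unfolding lam_measure_def Lb_def by measurable
  qed
  have "(\<integral>\<^sup>+\<omega>. ennreal (V (cl_state A B K x0 \<omega> (Suc t))) \<partial>lam_measure q)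
      = (\<integral>\<^sup>+b. (\<integral>\<^sup>+\<omega>. ennreal (V (cl_state A B K x0 (case_nat b \<omega>) (Suc t))) \<partial>PiM UNIV (\<lambda>i. Lb)) \<partial>Lb)"
    unfolding lam_measure_def Lb_def[symmetric] by (rule Lb.pim_split[OF meas])
  also have "\<dots> = (\<integral>\<^sup>+b. (\<integral>\<^sup>+\<omega>. ennreal (V (cl_state A B K ((A + (if b then 1 else 0) *\<^sub>R (B ** K)) *v x0) \<omega> t)) \<partial>lam_measure q) \<partial>Lb)"
    unfolding lam_measure_def Lb_def[symmetric] cl_state_shift by simp
  also have "\<dots> \<le> (\<integral>\<^sup>+b. ennreal (c ^ t * V ((A + (if b then 1 else 0) *\<^sub>R (B ** K)) *v x0)) \<partial>Lb)"
    by (rule nn_integral_mono) (use Suc.IH in \<open>simp add: V_def\<close>)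
  also have "\<dots> = ennreal (c ^ t * V ((A + B ** K) *v x0)) * ennreal (1 - q) + ennreal (c ^ t * V (A *v x0)) * ennreal q"
    unfolding Lb_def using q by (subst nn_integral_bernoulli_pmf) simp_all
  also have "\<dots> = ennreal (c ^ t * ((1 - q) * V ((A + B ** K) *v x0) + q * V (A *v x0)))"
    by (rule enn_comb) (use q c Vnn in \<open>simp_all add: V_def\<close>)
  also have "\<dots> \<le> ennreal (c ^ t * (c * V x0))"
    using dec[of x0] c by (intro ennreal_leI mult_left_mono) (simp_all add: V_def)
  finally show ?case by (simp add: V_def mult.assoc mult.left_commute del: cl_state.simps)
qed



lemma stab:
  fixes A :: "real^'n^'n" and B :: "real^'m^'n" and K :: "real^'n^'m" and P :: "real^'n^'n"
  assumes q: "0 \<le> q" "q \<le> 1"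
    and m: "m > 0" "\<And>x. m * (norm x)\<^sup>2 \<le> x \<bullet> (P *v x)"
    and C: "C > 0" "\<And>x. x \<bullet> (P *v x) \<le> C * (norm x)\<^sup>2"
    and dec: "\<And>x. (1 - q) * (((A + B ** K) *v x) \<bullet> (P *v ((A + B ** K) *v x))) + q * ((A *v x) \<bullet> (P *v (A *v x)))
               \<le> c * (x \<bullet> (P *v x))"
    and c: "0 \<le> c" "c < 1"
  shows "ms_stabilizes A B q K"
  unfolding ms_stabilizes_def
proof (intro allI impI, elim conjE)
  fix \<mu> :: "(real^'n) measure"
  assume pmu: "prob_space \<mu>" and smu: "sets \<mu> = sets borel" and int: "integrable \<mu> (\<lambda>x. (norm x)\<^sup>2)"
  interpret L: prob_space "lam_measure q" by (rule lam_prob)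
  define V where "V = (\<lambda>x::real^'n. x \<bullet> (P *v x))"
  have Vnn: "\<And>x. 0 \<le> V x" unfolding V_def using m by (meson order_trans mult_nonneg_nonneg less_imp_le zero_le_power2)
  have Vc: "continuous_on UNIV V" unfolding V_def by (rule V_cont)
  define N where "N = \<mu> \<Otimes>\<^sub>M lam_measure q"
  define I where "I = integral\<^sup>L \<mu> (\<lambda>x. (norm x)\<^sup>2)"
  have I0: "0 \<le> I" unfolding I_def by simp
  have nnI: "(\<integral>\<^sup>+x. ennreal ((norm x)\<^sup>2) \<partial>\<mu>) = ennreal I"
    unfolding I_def by (rule nn_integral_eq_integral[OF int]) simp
  have fstm: "fst \<in> borel_measurable N"
  proof -
    have "fst \<in> measurable N \<mu>" unfolding N_def by (rule measurable_fst)
    moreover have "measurable N \<mu> = measurable N borel" by (rule measurable_cong_sets) (simp_all add: smu)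
    ultimately show ?thesis by simp
  qed
  have sndm: "(\<lambda>\<omega>. snd \<omega> i) \<in> measurable N (count_space UNIV)" for i
    unfolding N_def by (rule measurable_compose[OF measurable_snd lam_comp_meas])
  have clm: "(\<lambda>\<omega>. cl_state A B K (fst \<omega>) (snd \<omega>) t) \<in> borel_measurable N" for t
    by (rule cl_state_meas[OF fstm sndm])
  have Vm: "(\<lambda>\<omega>. ennreal (V (cl_state A B K (fst \<omega>) (snd \<omega>) t))) \<in> borel_measurable N" for t
    using borel_measurable_continuous_on[OF Vc clm] by measurable
  have bound: "(\<integral>\<^sup>+\<omega>. ennreal ((cl_state A B K (fst \<omega>) (snd \<omega>) t) \<bullet> (cl_state A B K (fst \<omega>) (snd \<omega>) t)) \<partial>N)
      \<le> ennreal (c ^ t * (C * I / m))" for t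
  proof -
    have "(\<integral>\<^sup>+\<omega>. ennreal ((cl_state A B K (fst \<omega>) (snd \<omega>) t) \<bullet> (cl_state A B K (fst \<omega>) (snd \<omega>) t)) \<partial>N)
       \<le> (\<integral>\<^sup>+\<omega>. ennreal (1 / m) * ennreal (V (cl_state A B K (fst \<omega>) (snd \<omega>) t)) \<partial>N)"
    proof (rule nn_integral_mono)
      fix \<omega>
      let ?x = "cl_state A B K (fst \<omega>) (snd \<omega>) t"
      have "?x \<bullet> ?x = (norm ?x)\<^sup>2" by (simp add: power2_norm_eq_inner)
      also have "\<dots> \<le> V ?x / m" using m unfolding V_def by (simp add: field_simps)
      finally have "?x \<bullet> ?x \<le> 1 / m * V ?x" by simp
      then show "ennreal (?x \<bullet> ?x) \<le> ennreal (1 / m) * ennreal (V ?x)"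
        using m Vnn by (simp add: ennreal_mult[symmetric] ennreal_leI)
    qed
    also have "\<dots> = ennreal (1 / m) * (\<integral>\<^sup>+\<omega>. ennreal (V (cl_state A B K (fst \<omega>) (snd \<omega>) t)) \<partial>N)"
      by (rule nn_integral_cmult[OF Vm])
    also have "(\<integral>\<^sup>+\<omega>. ennreal (V (cl_state A B K (fst \<omega>) (snd \<omega>) t)) \<partial>N)
        = (\<integral>\<^sup>+x0. (\<integral>\<^sup>+l. ennreal (V (cl_state A B K x0 l t)) \<partial>lam_measure q) \<partial>\<mu>)"
      unfolding N_def using Vm[of t, unfolded N_def]
      by (subst L.nn_integral_fst[symmetric]) simp_all
    also have "\<dots> \<le> (\<integral>\<^sup>+x0. ennreal (c ^ t * C) * ennreal ((norm x0)\<^sup>2) \<partial>\<mu>)"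
    proof (rule nn_integral_mono)
      fix x0 :: "real^'n"
      have "(\<integral>\<^sup>+l. ennreal (V (cl_state A B K x0 l t)) \<partial>lam_measure q) \<le> ennreal (c ^ t * V x0)"
        unfolding V_def by (rule inner_decay[OF q _ dec c(1)]) (use Vnn in \<open>simp add: V_def\<close>)
      also have "\<dots> \<le> ennreal (c ^ t * C * (norm x0)\<^sup>2)"
        using C c unfolding V_def by (intro ennreal_leI) (simp add: mult.assoc mult_left_mono)
      also have "\<dots> = ennreal (c ^ t * C) * ennreal ((norm x0)\<^sup>2)"
        using C c by (simp add: ennreal_mult[symmetric])
      finally show "(\<integral>\<^sup>+l. ennreal (V (cl_state A B K x0 l t)) \<partial>lam_measure q) \<le> ennreal (c ^ t * C) * ennreal ((norm x0)\<^sup>2)" .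
    qed
    also have "\<dots> = ennreal (c ^ t * C) * ennreal I"
      by (subst nn_integral_cmult) (simp_all add: nnI borel_measurable_integrable[OF int])
    finally have "(\<integral>\<^sup>+\<omega>. ennreal ((cl_state A B K (fst \<omega>) (snd \<omega>) t) \<bullet> (cl_state A B K (fst \<omega>) (snd \<omega>) t)) \<partial>N)
       \<le> ennreal (1 / m) * (ennreal (c ^ t * C) * ennreal I)"
      by (simp add: mult_left_mono)
    also have "\<dots> = ennreal (c ^ t * (C * I / m))"
      using m C c I0 by (simp add: ennreal_mult[symmetric] field_simps)
    finally show ?thesis .
  qed
  have lim: "(\<lambda>t. ennreal (c ^ t * (C * I / m))) \<longlonglongrightarrow> 0"
  proof -
    have "(\<lambda>t. c ^ t * (C * I / m)) \<longlonglongrightarrow> 0 * (C * I / m)"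
      by (intro tendsto_mult tendsto_const LIMSEQ_power_zero) (use c in simp)
    then have "(\<lambda>t. ennreal (c ^ t * (C * I / m))) \<longlonglongrightarrow> ennreal 0"
      by (intro tendsto_ennrealI) simp
    then show ?thesis by simp
  qed
  show "(\<lambda>t. \<integral>\<^sup>+ \<omega>. ennreal (cl_state A B K (fst \<omega>) (snd \<omega>) t \<bullet> cl_state A B K (fst \<omega>) (snd \<omega>) t)
            \<partial>(\<mu> \<Otimes>\<^sub>M lam_measure q)) \<longlonglongrightarrow> 0"
    by (rule tendsto_sandwich[OF _ _ tendsto_const lim]) (use bound in \<open>simp_all add: N_def\<close>)
qed



lemma hoeff:
  fixes q \<beta> :: real and N :: nat
  assumes "0 < q" "q < 1" "0 < \<beta>" "\<beta> < 1" "N > 0"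
  shows "measure_pmf.prob (sample_pmf N q) {s. \<bar>q_hat N s - q\<bar> \<ge> Delta N \<beta>} \<le> \<beta>"
proof -
  define coins where "coins = sample_pmf N q"
  interpret H: Hoeffding_ineq_iid
    coins "{..<N}" "\<lambda>i f. if f i then 0 else 1" "\<lambda>f. if f 0 then 0 else 1" 0 1 q
  proof unfold_locales
    show "prob_space.indep_vars (measure_pmf coins) (\<lambda>_. borel) (\<lambda>i f. if f i then 0 else 1::real) {..<N}"
      unfolding coins_def sample_pmf_def
      by (intro prob_space.indep_vars_compose2[OF _ indep_vars_Pi_pmf])
         (auto simp: measure_pmf.prob_space_axioms)
  next
    have "measure_pmf.expectation coins (\<lambda>f. if f 0 then 0 else 1 :: real) =
          measure_pmf.expectation (map_pmf (\<lambda>f. f 0) coins) (\<lambda>b. if b then 0 else 1 :: real)"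
      by (simp add: coins_def)
    also have "map_pmf (\<lambda>f. f 0) coins = bernoulli_pmf (1-q)"
      using assms by (simp add: coins_def sample_pmf_def Pi_pmf_component)
    also have "measure_pmf.expectation \<dots> (\<lambda>b. if b then 0 else 1) = q"
      using assms by simp
    finally show "q \<equiv> measure_pmf.expectation coins (\<lambda>f. if f 0 then 0 else 1)" by simp
  next
    fix i assume i: "i \<in> {..<N}"
    have "distr (measure_pmf coins) borel (\<lambda>f. if f i then 0 else 1::real) =
        distr (measure_pmf (map_pmf (\<lambda>f. f i) coins)) borel (\<lambda>b. if b then 0 else 1)"
      unfolding map_pmf_rep_eq by (subst distr_distr) (auto simp: o_def)
    also have "map_pmf (\<lambda>f. f i) coins = bernoulli_pmf (1-q)"
      unfolding coins_def sample_pmf_def using i by (subst Pi_pmf_component) auto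
    also have "\<dots> = map_pmf (\<lambda>f. f 0) coins"
      unfolding coins_def sample_pmf_def using assms by (subst Pi_pmf_component) auto
    finally show "distr (measure_pmf coins) borel (\<lambda>f. if f i then 0 else 1::real) =
        distr (measure_pmf coins) borel (\<lambda>f. if f 0 then 0 else 1::real)"
      unfolding map_pmf_rep_eq by (subst (asm) distr_distr) (auto simp: o_def)
  qed auto
  have D: "Delta N \<beta> \<ge> 0" unfolding Delta_def using assms by simp
  have "measure_pmf.prob coins {x\<in>space (measure_pmf coins). \<bar>(\<Sum>i\<in>{..<N}. if x i then 0 else 1) / real (card {..<N}) - q\<bar> \<ge> Delta N \<beta>}
       \<le> 2 * exp (-2 * real (card {..<N}) * (Delta N \<beta>)\<^sup>2 / (1 - 0)\<^sup>2)"
    by (rule H.Hoeffding_ineq_abs_ge'[OF D]) (use assms in auto)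
  moreover have "2 * exp (-2 * real (card {..<N}) * (Delta N \<beta>)\<^sup>2 / (1 - 0)\<^sup>2) = \<beta>"
  proof -
    have "(Delta N \<beta>)\<^sup>2 = ln (2 / \<beta>) / (2 * real N)"
      unfolding Delta_def using assms by (simp add: divide_nonneg_pos)
    then have "-2 * real (card {..<N}) * (Delta N \<beta>)\<^sup>2 / (1 - 0)\<^sup>2 = - ln (2/\<beta>)"
      using assms by simp
    then show ?thesis using assms by (simp add: exp_minus)
  qed
  ultimately show ?thesis unfolding coins_def q_hat_def by simp
qed



declare transpose_matrix_vector[simp del]

lemma tr_dot: "(a::real^'n) \<bullet> (transpose (C::real^'n^'m) *v b) = (C *v a) \<bullet> b"
  by (simp add: transpose_matrix_vector dot_lmul_matrix[symmetric] inner_commute)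

lemma sym_dot: "transpose (P::real^'n^'n) = P \<Longrightarrow> (P *v a) \<bullet> b = a \<bullet> (P *v b)"
  by (metis tr_dot inner_commute)

lemma neg_mv: "(- (X::real^'n^'m)) *v x = - (X *v x)"
  by (simp add: matrix_vector_mult_def vec_eq_iff sum_negf)

lemma mv_neg: "(X::real^'n^'m) *v (- x) = - (X *v x)"
  by (simp add: matrix_vector_mult_def vec_eq_iff sum_negf)

lemma smult_mv: "(c *\<^sub>R (X::real^'n^'m)) *v x = c *\<^sub>R (X *v x)"
  by (simp add: scaleR_matrix_vector_assoc)

lemma posdef_nonneg: "posdef X \<Longrightarrow> x \<bullet> (X *v x) \<ge> 0"
  unfolding posdef_def by (cases "x = 0") (auto intro: less_imp_le)

lemma key_identity:
  fixes A P Q G :: "real^'n^'n" and B :: "real^'m^'n" and R Mi :: "real^'m^'m" and K :: "real^'n^'m"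
  assumes symP: "transpose P = P"
    and MMi: "(R + transpose B ** P ** B) ** Mi = mat 1"
    and Gdef: "G = transpose A ** P ** B ** Mi ** transpose B ** P ** A"
    and MRE: "P = Q + transpose A ** P ** A - (1 - qh) *\<^sub>R G"
    and Kdef: "K = - (Mi ** transpose B ** P ** A)"
  shows "(1 - q) * (((A + B ** K) *v x) \<bullet> (P *v ((A + B ** K) *v x))) + q * ((A *v x) \<bullet> (P *v (A *v x)))
       = x \<bullet> (P *v x) - x \<bullet> ((Q + (1 - q) *\<^sub>R (transpose K ** R ** K) - (q - qh) *\<^sub>R G) *v x)"
    and "x \<bullet> (G *v x) = (Mi *v (transpose B *v (P *v (A *v x)))) \<bullet> ((R + transpose B ** P ** B) *v (Mi *v (transpose B *v (P *v (A *v x)))))"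
    and "x \<bullet> ((transpose K ** R ** K) *v x) = (K *v x) \<bullet> (R *v (K *v x))"
proof -
  define y where "y = A *v x"
  define w where "w = transpose B *v (P *v y)"
  define v where "v = Mi *v w"
  define M where "M = R + transpose B ** P ** B"
  have Kx: "K *v x = - v"
    unfolding Kdef v_def w_def y_def by (simp add: neg_mv matrix_vector_mul_assoc[symmetric])
  have Mv: "M *v v = w"
    unfolding v_def M_def by (simp add: matrix_vector_mul_assoc MMi)
  have Mv2: "M *v v = R *v v + transpose B *v (P *v (B *v v))"
    unfolding M_def by (simp add: matrix_vector_mult_add_rdistrib matrix_vector_mul_assoc[symmetric])
  have e1: "(B *v v) \<bullet> (P *v y) = v \<bullet> w"
    unfolding w_def by (simp add: tr_dot)
  have e1': "y \<bullet> (P *v (B *v v)) = v \<bullet> w"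
    using e1 sym_dot[OF symP] by (simp add: inner_commute)
  have e2: "(B *v v) \<bullet> (P *v (B *v v)) = v \<bullet> w - v \<bullet> (R *v v)"
  proof -
    have "v \<bullet> w = v \<bullet> (R *v v) + v \<bullet> (transpose B *v (P *v (B *v v)))"
      using Mv Mv2 by (metis inner_add_right)
    then show ?thesis by (simp add: tr_dot)
  qed
  have G: "x \<bullet> (G *v x) = v \<bullet> w"
    unfolding Gdef by (simp add: matrix_vector_mul_assoc[symmetric] tr_dot e1'
        flip: y_def w_def v_def)
  show G': "x \<bullet> (G *v x) = (Mi *v (transpose B *v (P *v (A *v x)))) \<bullet> ((R + transpose B ** P ** B) *v (Mi *v (transpose B *v (P *v (A *v x)))))"
    using G Mv by (simp add: M_def v_def w_def y_def inner_commute)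
  have KRK: "x \<bullet> ((transpose K ** R ** K) *v x) = v \<bullet> (R *v v)"
    by (simp add: matrix_vector_mul_assoc[symmetric] tr_dot Kx mv_neg)
  show "x \<bullet> ((transpose K ** R ** K) *v x) = (K *v x) \<bullet> (R *v (K *v x))"
    by (simp add: matrix_vector_mul_assoc[symmetric] tr_dot)
  have Px: "x \<bullet> (P *v x) = x \<bullet> (Q *v x) + y \<bullet> (P *v y) - (1 - qh) * (v \<bullet> w)"
  proof -
    have "x \<bullet> (P *v x) = x \<bullet> ((Q + transpose A ** P ** A - (1 - qh) *\<^sub>R G) *v x)"
      using MRE by simp
    also have "\<dots> = x \<bullet> (Q *v x) + y \<bullet> (P *v y) - (1 - qh) * (x \<bullet> (G *v x))"
      by (simp add: matrix_vector_mult_add_rdistrib matrix_vector_mult_diff_rdistrib smult_mv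
          inner_add_right inner_diff_right matrix_vector_mul_assoc[symmetric] tr_dot y_def)
    finally show ?thesis using G by simp
  qed
  have ABK: "(A + B ** K) *v x = y - B *v v"
    by (simp add: matrix_vector_mult_add_rdistrib matrix_vector_mul_assoc[symmetric] Kx y_def mv_neg)
  have V: "((A + B ** K) *v x) \<bullet> (P *v ((A + B ** K) *v x)) = y \<bullet> (P *v y) - 2 * (v \<bullet> w) + (v \<bullet> w - v \<bullet> (R *v v))"
    unfolding ABK using e1 e1' e2
    by (simp add: matrix_vector_mult_diff_distrib inner_diff_left inner_diff_right)
  have L: "x \<bullet> ((Q + (1 - q) *\<^sub>R (transpose K ** R ** K) - (q - qh) *\<^sub>R G) *v x)
      = x \<bullet> (Q *v x) + (1 - q) * (v \<bullet> (R *v v)) - (q - qh) * (v \<bullet> w)"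
    using KRK G by (simp add: matrix_vector_mult_add_rdistrib matrix_vector_mult_diff_rdistrib smult_mv
          inner_add_right inner_diff_right)
  show "(1 - q) * (((A + B ** K) *v x) \<bullet> (P *v ((A + B ** K) *v x))) + q * ((A *v x) \<bullet> (P *v (A *v x)))
       = x \<bullet> (P *v x) - x \<bullet> ((Q + (1 - q) *\<^sub>R (transpose K ** R ** K) - (q - qh) *\<^sub>R G) *v x)"
    unfolding V L Px by (simp add: y_def[symmetric] algebra_simps)
qed



declare transpose_matrix_vector[simp del]

lemma tr_add: "transpose ((X::real^'n^'m) + Y) = transpose X + transpose Y"
  by (simp add: transpose_def vec_eq_iff)

lemma det_main:
  fixes A Q :: "real^'n^'n" and B :: "real^'m^'n" and R :: "real^'m^'m"
  assumes Q: "posdef Q" and R: "posdef R"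
    and q: "0 < q" "q < 1"
    and qh0: "0 \<le> qh" and qh1: "qh \<le> 1"
    and qhc: "qh < crit_prob A B Q R"
    and qbar: "qbar A B Q R qh \<ge> qh + D"
    and close: "\<bar>qh - q\<bar> < D"
  shows "ms_stabilizes A B q (ric_gain A B Q R qh)"
proof -
  define Sc where "Sc = {c \<in> {0..1}. \<forall>p \<in> {0..<c}. \<exists>!X. posdef X \<and> MRE A B Q R p X}"
  have "0 \<in> Sc" unfolding Sc_def by simp
  moreover have "bdd_above Sc" unfolding Sc_def by (rule bdd_aboveI[of _ 1]) auto
  ultimately obtain c0 where "c0 \<in> Sc" "qh < c0"
    using qhc less_cSup_iff[of Sc qh] unfolding crit_prob_def Sc_def[symmetric] by blast
  then have ex1: "\<exists>!X. posdef X \<and> MRE A B Q R qh X" using qh0 unfolding Sc_def by auto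
  define P where "P = ric_sol A B Q R qh"
  have PP: "posdef P \<and> MRE A B Q R qh P"
    unfolding P_def ric_sol_def by (rule theI'[OF ex1])
  then have Ppd: "posdef P" and Pmre: "MRE A B Q R qh P" by auto
  have symP: "transpose P = P" using Ppd unfolding posdef_def by auto
  have symR: "transpose R = R" using R unfolding posdef_def by auto
  have symQ: "transpose Q = Q" using Q unfolding posdef_def by auto
  define M where "M = R + transpose B ** P ** B"
  have Mform: "z \<bullet> (M *v z) = z \<bullet> (R *v z) + (B *v z) \<bullet> (P *v (B *v z))" for z
    unfolding M_def by (simp add: matrix_vector_mult_add_rdistrib inner_add_right
        matrix_vector_mul_assoc[symmetric] tr_dot)
  have Mnn: "z \<bullet> (M *v z) \<ge> 0" for z
    unfolding Mform using posdef_nonneg[OF R] posdef_nonneg[OF Ppd] by (simp add: add_nonneg_nonneg)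
  have "\<forall>z. M *v z = 0 \<longrightarrow> z = 0"
  proof (intro allI impI)
    fix z assume "M *v z = 0"
    then have "z \<bullet> (R *v z) + (B *v z) \<bullet> (P *v (B *v z)) = 0" using Mform[of z] by simp
    then have "z \<bullet> (R *v z) \<le> 0" using posdef_nonneg[OF Ppd, of "B *v z"] by linarith
    then show "z = 0" using R unfolding posdef_def by (meson not_less)
  qed
  then obtain Bi where "Bi ** M = mat 1" using matrix_left_invertible_ker by blast
  then have "invertible M" using invertible_left_inverse by blast
  then have "\<exists>A'. M ** A' = mat 1 \<and> A' ** M = mat 1" unfolding invertible_def .
  then have MMi: "M ** matrix_inv M = mat 1"
    unfolding matrix_inv_def by (rule someI_ex[where P = "\<lambda>A'. M ** A' = mat 1 \<and> A' ** M = mat 1", THEN conjunct1])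
  define Mi where "Mi = matrix_inv M"
  define G where "G = transpose A ** P ** B ** Mi ** transpose B ** P ** A"
  define K where "K = ric_gain A B Q R qh"
  have Kdef: "K = - (Mi ** transpose B ** P ** A)"
    unfolding K_def ric_gain_def Let_def P_def[symmetric] M_def[symmetric] Mi_def ..
  have MRE': "P = Q + transpose A ** P ** A - (1 - qh) *\<^sub>R G"
    using Pmre unfolding MRE_def G_def Mi_def M_def .
  have MMi': "(R + transpose B ** P ** B) ** Mi = mat 1" using MMi unfolding Mi_def M_def .
  note KI = key_identity[OF symP MMi' G_def MRE' Kdef]
  define L where "L = (\<lambda>z. Q + (1 - z) *\<^sub>R (transpose K ** R ** K) - (z - qh) *\<^sub>R G)"
  have Lform: "x \<bullet> (L z *v x) = x \<bullet> (Q *v x) + (1 - z) * ((K *v x) \<bullet> (R *v (K *v x))) - (z - qh) * (x \<bullet> (G *v x))" for z x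
    unfolding L_def using KI(3)[of x]
    by (simp add: matrix_vector_mult_add_rdistrib matrix_vector_mult_diff_rdistrib smult_mv inner_add_right inner_diff_right)
  have gnn: "x \<bullet> (G *v x) \<ge> 0" for x
    using KI(2)[of x] Mnn unfolding M_def by simp
  have rnn: "(K *v x) \<bullet> (R *v (K *v x)) \<ge> 0" for x by (rule posdef_nonneg[OF R])
  have Lmono: "x \<bullet> (L z *v x) \<ge> x \<bullet> (L z' *v x)" if "z \<le> z'" for z z' x
  proof -
    have "(z' - z) * ((K *v x) \<bullet> (R *v (K *v x))) \<ge> 0" "(z' - z) * (x \<bullet> (G *v x)) \<ge> 0"
      using that rnn gnn by simp_all
    then show ?thesis unfolding Lform by (simp add: algebra_simps)
  qed
  define F where "F = {x \<in> {0..1}. x \<ge> qh \<and> posdef (L x)}"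
  have qbarF: "qbar A B Q R qh = Sup F"
    unfolding qbar_def Let_def F_def L_def P_def[symmetric] K_def[symmetric] G_def Mi_def M_def ..
  have "posdef (L qh)"
    unfolding posdef_def
  proof
    show "transpose (L qh) = L qh"
      unfolding L_def by (simp add: tr_add transpose_scalar matrix_transpose_mul symR symQ matrix_mul_assoc)
    show "\<forall>x. x \<noteq> 0 \<longrightarrow> 0 < x \<bullet> (L qh *v x)"
    proof (intro allI impI)
      fix x :: "real^'n" assume "x \<noteq> 0"
      then have "x \<bullet> (Q *v x) > 0" using Q unfolding posdef_def by auto
      moreover have "(1 - qh) * ((K *v x) \<bullet> (R *v (K *v x))) \<ge> 0"
        using qh1 rnn by simp
      ultimately show "0 < x \<bullet> (L qh *v x)" unfolding Lform by simp
    qed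
  qed
  then have qhF: "qh \<in> F" unfolding F_def using qh0 qh1 by simp
  have bddF: "bdd_above F" unfolding F_def by (rule bdd_aboveI[of _ 1]) auto
  have "q < Sup F" using close qbar qbarF by linarith
  then obtain x2 where x2: "x2 \<in> F" "q < x2"
    using less_cSup_iff[of F q] qhF bddF by blast
  have Lqpos: "x \<bullet> (L q *v x) > 0" if "x \<noteq> 0" for x
  proof -
    have "x \<bullet> (L x2 *v x) > 0" using x2(1) that unfolding F_def posdef_def by auto
    moreover have "x \<bullet> (L q *v x) \<ge> x \<bullet> (L x2 *v x)" using x2(2) by (intro Lmono) simp
    ultimately show ?thesis by linarith
  qed
  obtain e where e: "e > 0" "\<And>x. x \<bullet> (L q *v x) \<ge> e * (norm x)\<^sup>2"
    using quad_lower[of "L q", OF Lqpos] by blast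
  obtain m where m: "m > 0" "\<And>x. x \<bullet> (P *v x) \<ge> m * (norm x)\<^sup>2"
    using quad_lower[of P] Ppd unfolding posdef_def by blast
  obtain C where C: "C > 0" "\<And>x. x \<bullet> (P *v x) \<le> C * (norm x)\<^sup>2"
    using quad_upper[of P] by blast
  define C' where "C' = C + e"
  have C': "C' > 0" "e < C'" unfolding C'_def using C e by auto
  define c where "c = 1 - e / C'"
  have c: "0 \<le> c" "c < 1" unfolding c_def using C' e by (auto simp: field_simps)
  have dec: "(1 - q) * (((A + B ** K) *v x) \<bullet> (P *v ((A + B ** K) *v x))) + q * ((A *v x) \<bullet> (P *v (A *v x)))
               \<le> c * (x \<bullet> (P *v x))" for x
  proof -
    have "(1 - q) * (((A + B ** K) *v x) \<bullet> (P *v ((A + B ** K) *v x))) + q * ((A *v x) \<bullet> (P *v (A *v x)))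
        = x \<bullet> (P *v x) - x \<bullet> (L q *v x)" using KI(1)[of q x] unfolding L_def .
    also have "\<dots> \<le> x \<bullet> (P *v x) - e * (norm x)\<^sup>2" using e(2)[of x] by linarith
    also have "\<dots> \<le> x \<bullet> (P *v x) - (e / C') * (x \<bullet> (P *v x))"
    proof -
      have "x \<bullet> (P *v x) \<le> C' * (norm x)\<^sup>2" using C(2)[of x] e unfolding C'_def
        by (simp add: distrib_right add_increasing2)
      then have "(e / C') * (x \<bullet> (P *v x)) \<le> (e / C') * (C' * (norm x)\<^sup>2)"
        using e C' by (intro mult_left_mono) auto
      also have "\<dots> = e * (norm x)\<^sup>2" using C' by simp
      finally show ?thesis by linarith
    qed
    also have "\<dots> = c * (x \<bullet> (P *v x))" unfolding c_def by (simp add: algebra_simps)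
    finally show ?thesis .
  qed
  show ?thesis
    unfolding K_def[symmetric]
    by (rule stab[OF _ _ m(1) m(2) C dec c]) (use q in simp_all)
qed


lemma q_hat_range: "N > 0 \<Longrightarrow> 0 \<le> q_hat N s \<and> q_hat N s \<le> 1"
proof -
  assume N: "N > 0"
  have "(\<Sum>i<N. (if s i then 0 else 1::real)) \<le> (\<Sum>i<N. 1)" by (intro sum_mono) auto
  then have "(\<Sum>i<N. (if s i then 0 else 1::real)) \<le> real N" by simp
  moreover have "(\<Sum>i<N. (if s i then 0 else 1::real)) \<ge> 0" by (intro sum_nonneg) auto
  ultimately show ?thesis unfolding q_hat_def using N by (simp add: divide_le_eq_1)
qed

theorem theorem7:
  fixes A Q :: "real^'n^'n" and B :: "real^'m^'n" and R :: "real^'m^'m"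
    and q \<beta> :: real and N :: nat
  assumes "stabilizable A B"
    and "posdef Q" and "posdef R"
    and "0 < q" and "q < 1"
    and "q < crit_prob A B Q R"
    and "0 < \<beta>" and "\<beta> < 1"
    and "N > 0"
  shows "measure_pmf.prob (sample_pmf N q)
           {s. q_hat N s < crit_prob A B Q R
               \<and> qbar A B Q R (q_hat N s) \<ge> q_hat N s + Delta N \<beta>
               \<longrightarrow> ms_stabilizes A B q (ric_gain A B Q R (q_hat N s))}
         \<ge> 1 - \<beta>"
proof -
  define E where "E = {s. \<bar>q_hat N s - q\<bar> < Delta N \<beta>}"
  have sub: "E \<subseteq> {s. q_hat N s < crit_prob A B Q R
               \<and> qbar A B Q R (q_hat N s) \<ge> q_hat N s + Delta N \<beta>
               \<longrightarrow> ms_stabilizes A B q (ric_gain A B Q R (q_hat N s))}"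
  proof (intro subsetI CollectI impI, elim conjE)
    fix s assume "s \<in> E" "q_hat N s < crit_prob A B Q R" "qbar A B Q R (q_hat N s) \<ge> q_hat N s + Delta N \<beta>"
    then show "ms_stabilizes A B q (ric_gain A B Q R (q_hat N s))"
      using q_hat_range[OF assms(9), of s] assms unfolding E_def
      by (intro det_main[where D = "Delta N \<beta>"]) auto
  qed
  have "UNIV - E = {s. \<bar>q_hat N s - q\<bar> \<ge> Delta N \<beta>}" unfolding E_def by auto
  then have "measure_pmf.prob (sample_pmf N q) E = 1 - measure_pmf.prob (sample_pmf N q) {s. \<bar>q_hat N s - q\<bar> \<ge> Delta N \<beta>}"
    using measure_pmf.prob_compl[of E "sample_pmf N q"] by simp
  also have "\<dots> \<ge> 1 - \<beta>" using hoeff[OF assms(4,5,7,8,9)] by simp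
  finally show ?thesis
    using measure_pmf.finite_measure_mono[OF sub, of "sample_pmf N q"] by simp
qed

end
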